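(* Let $P$ be a convex polygon, let $\mathcal{R}$ be the smallest axis-parallel rectangle containing $P$, with side lengths $L\ge W>0$, and let $r=\frac14\sqrt{L^2+4W^2}$. Suppose that two vertices of $P$ coincide with two opposite (non-adjacent) corners of $\mathcal{R}$. Then $r\le 2\,r_{opt}(P)$.
   Context: For a compact set $X\subset\mathbb{R}^2$, $r_{opt}(X)$ denotes the minimum $r$ such that two closed disks of radius $r$ have union containing $X$. The number $r$ is the radius of the two congruent disks circumscribing the two halves $\frac L2\times W$ of $\mathcal{R}$. *)

theory Defs
  imports "HOL-Analysis.Analysis"
begin

text \<open>Points of the plane are modelled as real \<times> real (product metric = Euclidean metric).\<close>

definition convex_polygon :: "(real \<times> real) set \<Rightarrow> bool" where
  "convex_polygon P \<longleftrightarrow> (\<exists>S. finite S \<and> P = convex hull S) \<and> interior P \<noteq> {}"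

definition xlo :: "(real \<times> real) set \<Rightarrow> real" where "xlo X = Inf (fst ` X)"
definition xhi :: "(real \<times> real) set \<Rightarrow> real" where "xhi X = Sup (fst ` X)"
definition ylo :: "(real \<times> real) set \<Rightarrow> real" where "ylo X = Inf (snd ` X)"
definition yhi :: "(real \<times> real) set \<Rightarrow> real" where "yhi X = Sup (snd ` X)"

definition bounding_rect :: "(real \<times> real) set \<Rightarrow> (real \<times> real) set" where
  "bounding_rect X = {xlo X..xhi X} \<times> {ylo X..yhi X}"

definition r_opt :: "(real \<times> real) set \<Rightarrow> real" where
  "r_opt X = Inf {r. 0 \<le> r \<and> (\<exists>c1 c2. X \<subseteq> cball c1 r \<union> cball c2 r)}"

end

theory Submission
  imports Defs
begin

lemma two_balls_segment:
  fixes A B c1 c2 :: "real \<times> real"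
  assumes "closed_segment A B \<subseteq> cball c1 \<rho> \<union> cball c2 \<rho>"
  shows "dist A B \<le> 4 * \<rho>"
proof -
  have Ain: "A \<in> cball c1 \<rho> \<union> cball c2 \<rho>" and Bin: "B \<in> cball c1 \<rho> \<union> cball c2 \<rho>"
    using assms by auto
  have one: "dist A B \<le> 2 * \<rho>" if "A \<in> cball c \<rho>" "B \<in> cball c \<rho>" for c
    using that dist_triangle[of A B c] by (auto simp: dist_commute)
  have two: "dist A B \<le> 4 * \<rho>"
    if h: "A \<in> cball c \<rho>" "B \<in> cball d \<rho>"
       "closed_segment A B \<subseteq> cball c \<rho> \<union> cball d \<rho>" for c d
  proof -
    have "connected (closed_segment A B)" by simp
    then obtain p where p: "p \<in> cball c \<rho>" "p \<in> cball d \<rho>"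
      using h unfolding connected_closed
      by (metis (no_types, lifting) closed_cball disjoint_iff_not_equal Int_iff
          ends_in_segment(1) ends_in_segment(2) empty_iff)
    have "dist A p \<le> 2 * \<rho>" using one[of c] h p
      using dist_triangle[of A p c] by (auto simp: dist_commute)
    moreover have "dist p B \<le> 2 * \<rho>"
      using h p dist_triangle[of p B d] by (auto simp: dist_commute)
    ultimately show ?thesis using dist_triangle[of A B p] by linarith
  qed
  show ?thesis
  proof (cases "A \<in> cball c1 \<rho>")
    case True
    show ?thesis
    proof (cases "B \<in> cball c1 \<rho>")
      case True2: True
      have "0 \<le> \<rho>" using True by (auto intro: order_trans[OF zero_le_dist])
      then show ?thesis using one[OF True True2] by linarith
    next
      case False
      then show ?thesis using two[OF True] Bin assms by auto
    qed
  next
    case False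
    then have A2: "A \<in> cball c2 \<rho>" using Ain by auto
    show ?thesis
    proof (cases "B \<in> cball c2 \<rho>")
      case True2: True
      have "0 \<le> \<rho>" using A2 by (auto intro: order_trans[OF zero_le_dist])
      then show ?thesis using one[OF A2 True2] by linarith
    next
      case False
      then have "B \<in> cball c1 \<rho>" using Bin by auto
      then show ?thesis using two[OF A2, of c1] assms by auto
    qed
  qed
qed

theorem lemma3:
  fixes P :: "(real \<times> real) set" and L W r :: real
  assumes "convex_polygon P"
    and "L = max (xhi P - xlo P) (yhi P - ylo P)"
    and "W = min (xhi P - xlo P) (yhi P - ylo P)"
    and "W > 0"
    and "r = sqrt (L\<^sup>2 + 4 * W\<^sup>2) / 4"
    and "((xlo P, ylo P) extreme_point_of P \<and> (xhi P, yhi P) extreme_point_of P) \<or>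
         ((xlo P, yhi P) extreme_point_of P \<and> (xhi P, ylo P) extreme_point_of P)"
  shows "r \<le> 2 * r_opt P"
proof -
  obtain S where S: "finite S" "P = convex hull S" using assms(1) unfolding convex_polygon_def by auto
  have cvx: "convex P" using S by simp
  have "compact P" using S by (simp add: compact_convex_hull finite_imp_compact)
  then have "bounded P" by (rule compact_imp_bounded)
  then obtain e x where ex: "P \<subseteq> cball x e" "0 \<le> e" using bounded_subset_cball by blast
  define a where "a = xhi P - xlo P"
  define b where "b = yhi P - ylo P"
  obtain A B where AB: "A \<in> P" "B \<in> P" "dist A B = sqrt (a^2 + b^2)"
  proof (cases "(xlo P, ylo P) extreme_point_of P \<and> (xhi P, yhi P) extreme_point_of P")
    case True
    then show ?thesis
      using that[of "(xlo P, ylo P)" "(xhi P, yhi P)"]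
      by (auto simp: extreme_point_of_def dist_Pair_Pair dist_real_def a_def b_def power2_commute)
  next
    case False
    then have "(xlo P, yhi P) extreme_point_of P \<and> (xhi P, ylo P) extreme_point_of P" using assms(6) by auto
    then show ?thesis
      using that[of "(xlo P, yhi P)" "(xhi P, ylo P)"]
      by (auto simp: extreme_point_of_def dist_Pair_Pair dist_real_def a_def b_def power2_commute)
  qed
  have seg: "closed_segment A B \<subseteq> P" using cvx AB by (simp add: closed_segment_subset)
  let ?T = "{r. 0 \<le> r \<and> (\<exists>c1 c2. P \<subseteq> cball c1 r \<union> cball c2 r)}"
  have ne: "?T \<noteq> {}" using ex by blast
  have lb: "dist A B / 4 \<le> t" if "t \<in> ?T" for t
  proof -
    from that obtain c1 c2 where "P \<subseteq> cball c1 t \<union> cball c2 t" by auto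
    then have "dist A B \<le> 4 * t" using seg two_balls_segment by blast
    then show ?thesis by simp
  qed
  have "dist A B / 4 \<le> r_opt P" unfolding r_opt_def by (rule cInf_greatest[OF ne lb])
  moreover have "L^2 + W^2 = a^2 + b^2" using assms(2,3) a_def b_def
    by (cases "a \<le> b") (auto simp: max_def min_def)
  moreover have "r \<le> sqrt (L^2 + W^2) / 2"
  proof -
    have "sqrt (L\<^sup>2 + 4 * W\<^sup>2) \<le> sqrt (4 * (L^2 + W^2))"
      by (rule real_sqrt_le_mono) (simp add: power2_eq_square)
    also have "\<dots> = 2 * sqrt (L^2 + W^2)" by (simp only: real_sqrt_mult) simp
    finally show ?thesis using assms(5) by simp
  qed
  ultimately show ?thesis using AB(3) by simp
qed

end
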